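(* Let $L$ be a Lie algebra over $\mathbb{C}$ with a countable basis, and let $V_1,V_2$ be $L$-modules. Suppose that one of the following conditions holds: (1) $V_1$ is simple and $\mathrm{ann}_L(v)+\mathrm{ann}_L(S)=L$ for all $v\in V_1$ and all finite subsets $S\subset V_2$; (2) for every finite subset $S\subset V_2$, $V_1$ is a simple $\mathrm{ann}_L(S)$-module. Then (a) every submodule of $V_1\otimes V_2$ is of the form $V_1\otimes V_2'$ for some submodule $V_2'$ of $V_2$; and (b) if $V_1$ and $V_2$ are simple, then $V_1\otimes V_2$ is simple.
   Context: For an $L$-module $V$ and $v\in V$, $\mathrm{ann}_L(v)=\{g\in L\mid gv=0\}$, and for $S\subset V$, $\mathrm{ann}_L(S)=\bigcap_{v\in S}\mathrm{ann}_L(v)$. $V_1\otimes V_2$ carries the usual tensor product $L$-module structure $g(v_1\otimes v_2)=gv_1\otimes v_2+v_1\otimes gv_2$. *)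

theory Defs
  imports Complex_Main "HOL-Library.Countable_Set"
begin

text \<open>Complex vector spaces are given by explicit scalar multiplications
  (HOL has no class of complex vector spaces); the underlying sets are the whole types.\<close>

definition bilinear_map ::
  "(complex \<Rightarrow> 'a::ab_group_add \<Rightarrow> 'a) \<Rightarrow> (complex \<Rightarrow> 'b::ab_group_add \<Rightarrow> 'b)
   \<Rightarrow> (complex \<Rightarrow> 'c::ab_group_add \<Rightarrow> 'c) \<Rightarrow> ('a \<Rightarrow> 'b \<Rightarrow> 'c) \<Rightarrow> bool" where
  "bilinear_map sa sb sc f \<longleftrightarrow>
     (\<forall>x. Vector_Spaces.linear sb sc (f x)) \<and> (\<forall>y. Vector_Spaces.linear sa sc (\<lambda>x. f x y))"

definition lie_algebra :: "(complex \<Rightarrow> 'l::ab_group_add \<Rightarrow> 'l) \<Rightarrow> ('l \<Rightarrow> 'l \<Rightarrow> 'l) \<Rightarrow> bool" where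
  "lie_algebra sL br \<longleftrightarrow> vector_space sL \<and> bilinear_map sL sL sL br \<and>
     (\<forall>x. br x x = 0) \<and>
     (\<forall>x y z. br x (br y z) + br y (br z x) + br z (br x y) = 0)"

definition countable_basis :: "(complex \<Rightarrow> 'l::ab_group_add \<Rightarrow> 'l) \<Rightarrow> bool" where
  "countable_basis sL \<longleftrightarrow>
     (\<exists>B. countable B \<and> \<not> module.dependent sL B \<and> module.span sL B = UNIV)"

definition lie_module ::
  "(complex \<Rightarrow> 'l::ab_group_add \<Rightarrow> 'l) \<Rightarrow> ('l \<Rightarrow> 'l \<Rightarrow> 'l)
   \<Rightarrow> (complex \<Rightarrow> 'v::ab_group_add \<Rightarrow> 'v) \<Rightarrow> ('l \<Rightarrow> 'v \<Rightarrow> 'v) \<Rightarrow> bool" where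
  "lie_module sL br sV act \<longleftrightarrow> vector_space sV \<and> bilinear_map sL sV sV act \<and>
     (\<forall>x y v. act (br x y) v = act x (act y v) - act y (act x v))"

definition ann :: "('l \<Rightarrow> 'v \<Rightarrow> 'v::zero) \<Rightarrow> 'v \<Rightarrow> 'l set" where
  "ann act v = {g. act g v = 0}"

definition ann_set :: "('l \<Rightarrow> 'v \<Rightarrow> 'v::zero) \<Rightarrow> 'v set \<Rightarrow> 'l set" where
  "ann_set act S = {g. \<forall>v\<in>S. act g v = 0}"

text \<open>Submodule of V for the action restricted to the subset A of L
  (A = UNIV: L-submodule; A = a subalgebra: submodule for that subalgebra).\<close>
definition submodule ::
  "(complex \<Rightarrow> 'v::ab_group_add \<Rightarrow> 'v) \<Rightarrow> ('l \<Rightarrow> 'v \<Rightarrow> 'v) \<Rightarrow> 'l set \<Rightarrow> 'v set \<Rightarrow> bool" where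
  "submodule sV act A U \<longleftrightarrow> module.subspace sV U \<and> (\<forall>g\<in>A. \<forall>u\<in>U. act g u \<in> U)"

definition simple_module ::
  "(complex \<Rightarrow> 'v::ab_group_add \<Rightarrow> 'v) \<Rightarrow> ('l \<Rightarrow> 'v \<Rightarrow> 'v) \<Rightarrow> 'l set \<Rightarrow> bool" where
  "simple_module sV act A \<longleftrightarrow> (\<exists>v::'v. v \<noteq> 0) \<and>
     (\<forall>U. submodule sV act A U \<longrightarrow> U = {0} \<or> U = UNIV)"

text \<open>(W, tens) is a tensor product of V1 and V2: tens is bilinear, W is spanned by
  the pure tensors, and every bilinear form on V1 x V2 factors through a linear
  functional on W (universal property for scalar targets, equivalent over a field).\<close>
definition is_tensor_product ::
  "(complex \<Rightarrow> 'a::ab_group_add \<Rightarrow> 'a) \<Rightarrow> (complex \<Rightarrow> 'b::ab_group_add \<Rightarrow> 'b)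
   \<Rightarrow> (complex \<Rightarrow> 'w::ab_group_add \<Rightarrow> 'w) \<Rightarrow> ('a \<Rightarrow> 'b \<Rightarrow> 'w) \<Rightarrow> bool" where
  "is_tensor_product s1 s2 sW tens \<longleftrightarrow> vector_space sW \<and> bilinear_map s1 s2 sW tens \<and>
     module.span sW {tens x y | x y. True} = UNIV \<and>
     (\<forall>B::'a \<Rightarrow> 'b \<Rightarrow> complex. bilinear_map s1 s2 (*) B \<longrightarrow>
        (\<exists>\<phi>. Vector_Spaces.linear sW (*) \<phi> \<and> (\<forall>x y. \<phi> (tens x y) = B x y)))"

end

theory Submission
  imports Defs "HOL-Analysis.Continuum_Not_Denumerable" "HOL-Computational_Algebra.Fundamental_Theorem_Algebra"
begin


lemma (in vector_space) indep_countable: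
  assumes C: "countable C" and sp: "span C = UNIV" and I: "independent I"
  shows "countable I"
proof -
  have "I \<subseteq> (\<Union>F\<in>{F. finite F \<and> F \<subseteq> C}. I \<inter> span F)"
  proof
    fix x assume x: "x \<in> I"
    have "x \<in> span C" using sp by auto
    then obtain t r where t: "finite t" "t \<subseteq> C" "x = (\<Sum>a\<in>t. r a *s a)"
      unfolding span_explicit by blast
    have "x \<in> span t" unfolding t(3) by (intro span_sum span_scale span_base)
    then show "x \<in> (\<Union>F\<in>{F. finite F \<and> F \<subseteq> C}. I \<inter> span F)" using t x by blast
  qed
  moreover have "countable (\<Union>F\<in>{F. finite F \<and> F \<subseteq> C}. I \<inter> span F)"
  proof (rule countable_UN)
    show "countable {F. finite F \<and> F \<subseteq> C}" using countable_Collect_finite_subset[OF C] .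
    fix F assume "F \<in> {F. finite F \<and> F \<subseteq> C}"
    then have "finite (I \<inter> span F)"
      using independent_span_bound[of F "I \<inter> span F"] independent_mono[OF I] by auto
    then show "countable (I \<inter> span F)" by (rule countable_finite)
  qed
  ultimately show ?thesis using countable_subset by blast
qed




locale lendo = vector_space s for s :: "complex \<Rightarrow> 'v::ab_group_add \<Rightarrow> 'v" +
  fixes \<phi> :: "'v \<Rightarrow> 'v"
  assumes lin: "Vector_Spaces.linear s s \<phi>"
begin

lemma phi_add: "\<phi> (x + y) = \<phi> x + \<phi> y" and phi_scale: "\<phi> (s c x) = s c (\<phi> x)"
  using lin unfolding Vector_Spaces.linear_iff by auto

lemma phi0[simp]: "\<phi> 0 = 0" using phi_scale[of 0 0] by simp

lemma phi_sum: "\<phi> (sum f A) = (\<Sum>a\<in>A. \<phi> (f a))"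
  by (induction A rule: infinite_finite_induct) (auto simp: phi_add)

lemma pow0[simp]: "(\<phi>^^k) 0 = 0" by (induction k) auto

lemma pow_add: "(\<phi>^^k) (x + y) = (\<phi>^^k) x + (\<phi>^^k) y"
  by (induction k) (auto simp: phi_add)
lemma pow_scale: "(\<phi>^^k) (s c x) = s c ((\<phi>^^k) x)"
  by (induction k) (auto simp: phi_scale)

definition peval :: "complex poly \<Rightarrow> 'v \<Rightarrow> 'v" where
  "peval p x = (\<Sum>k\<le>degree p. s (coeff p k) ((\<phi>^^k) x))"

lemma peval_bound: "degree p \<le> N \<Longrightarrow> peval p x = (\<Sum>k\<le>N. s (coeff p k) ((\<phi>^^k) x))"
  unfolding peval_def
  by (rule sum.mono_neutral_left) (auto simp: coeff_eq_0)

lemma peval_add: "peval (p + q) x = peval p x + peval q x"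
proof -
  let ?N = "max (degree p) (degree q)"
  have "peval (p + q) x = (\<Sum>k\<le>?N. s (coeff (p+q) k) ((\<phi>^^k) x))"
    by (rule peval_bound) (simp add: degree_add_le)
  also have "\<dots> = (\<Sum>k\<le>?N. s (coeff p k) ((\<phi>^^k) x)) + (\<Sum>k\<le>?N. s (coeff q k) ((\<phi>^^k) x))"
    by (simp add: scale_left_distrib sum.distrib)
  also have "\<dots> = peval p x + peval q x"
    using peval_bound[of p ?N x] peval_bound[of q ?N x] by simp
  finally show ?thesis .
qed

lemma peval_smult: "peval (smult c p) x = s c (peval p x)"
proof -
  have "peval (smult c p) x = (\<Sum>k\<le>degree p. s (coeff (smult c p) k) ((\<phi>^^k) x))"
    by (rule peval_bound) (simp add: degree_smult_le)
  also have "\<dots> = s c (peval p x)"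
    unfolding peval_def scale_sum_right by (rule sum.cong) (auto simp: mult.commute)
  finally show ?thesis .
qed

lemma peval_0[simp]: "peval 0 x = 0" by (simp add: peval_def)

lemma peval_const: "peval [:c:] x = s c x" by (simp add: peval_def)

lemma peval_pCons: "peval (pCons a p) x = s a x + \<phi> (peval p x)"
proof -
  have "peval (pCons a p) x = (\<Sum>k\<le>Suc (degree p). s (coeff (pCons a p) k) ((\<phi>^^k) x))"
    by (rule peval_bound) simp
  also have "\<dots> = s a x + (\<Sum>k\<le>degree p. s (coeff p k) ((\<phi>^^(Suc k)) x))"
    by (subst sum.atMost_Suc_shift) simp
  also have "\<dots> = s a x + \<phi> (peval p x)"
    by (simp add: peval_def phi_sum phi_scale)
  finally show ?thesis .
qed

lemma peval_lin_add: "peval p (x + y) = peval p x + peval p y"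
  by (simp add: peval_def pow_add scale_right_distrib sum.distrib)

lemma peval_lin_scale: "peval p (s c x) = s c (peval p x)"
  unfolding peval_def pow_scale scale_sum_right by (rule sum.cong) (auto simp: mult.commute)

lemma peval_lin_0: "peval p 0 = 0"
  by (simp add: peval_def)

lemma peval_lin_sum: "peval p (sum f A) = (\<Sum>a\<in>A. peval p (f a))"
  by (induction A rule: infinite_finite_induct) (simp_all add: peval_lin_add peval_lin_0)

lemma peval_sum: "peval (sum f A) x = (\<Sum>a\<in>A. peval (f a) x)"
  by (induction A rule: infinite_finite_induct) (auto simp: peval_add)

lemma peval_mult: "peval (p * q) x = peval p (peval q x)"
proof (induction p)
  case 0 then show ?case by simp
next
  case (pCons a p)
  have "peval (pCons a p * q) x = s a (peval q x) + peval (pCons 0 (p * q)) x"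
    by (simp add: peval_add peval_smult)
  also have "\<dots> = s a (peval q x) + \<phi> (peval p (peval q x))"
    by (simp add: peval_pCons pCons.IH)
  also have "\<dots> = peval (pCons a p) (peval q x)"
    by (simp add: peval_pCons)
  finally show ?case .
qed

lemma peval_lin: "peval [:-c, 1:] x = \<phi> x - s c x"
  by (simp add: peval_pCons peval_const phi_scale scale_minus_left)

lemma peval_inj:
  assumes inj: "\<And>c. inj (\<lambda>x. \<phi> x - s c x)" and p: "p \<noteq> 0"
  shows "inj (peval p)"
  using p
proof (induction "degree p" arbitrary: p rule: less_induct)
  case less
  show ?case
  proof (cases "degree p = 0")
    case True
    then obtain c where c: "p = [:c:]" by (metis degree_eq_zeroE)
    with less.prems have "c \<noteq> 0" by auto
    then show ?thesis unfolding c by (auto simp: peval_const inj_on_def)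
  next
    case False
    then have "\<not> constant (poly p)" by (simp add: constant_degree)
    then obtain z where "poly p z = 0" using fundamental_theorem_of_algebra by blast
    then obtain q where q: "p = [:-z, 1:] * q" using poly_eq_0_iff_dvd by (metis dvdE)
    with less.prems have q0: "q \<noteq> 0" by auto
    have "degree p = degree q + 1" unfolding q using q0 degree_mult_eq[of "[:-z,1:]" q] by simp
    then have "inj (peval q)" using less q0 by auto
    moreover have "peval p = (\<lambda>x. \<phi> x - s z x) \<circ> peval q"
      unfolding q by (rule ext) (simp only: comp_def peval_mult peval_lin)
    ultimately show ?thesis using inj inj_compose by metis
  qed
qed

end




lemma dixmier:
  fixes s :: "complex \<Rightarrow> 'v::ab_group_add \<Rightarrow> 'v" and v0 :: 'v
  assumes vs: "vector_space s"
    and C: "countable C" and Csp: "module.span s C = UNIV"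
    and nz: "v0 \<noteq> 0"
    and simple: "\<And>U. module.subspace s U \<Longrightarrow> (\<forall>g\<in>A. \<forall>u\<in>U. act g u \<in> U) \<Longrightarrow> U = {0} \<or> U = UNIV"
    and actlin: "\<And>g. g \<in> A \<Longrightarrow> Vector_Spaces.linear s s (act g)"
    and lin: "Vector_Spaces.linear s s \<phi>"
    and comm: "\<And>g x. g \<in> A \<Longrightarrow> \<phi> (act g x) = act g (\<phi> x)"
  shows "\<exists>c. \<forall>x. \<phi> x = s c x"
proof (rule ccontr)
  assume H: "\<not> (\<exists>c. \<forall>x. \<phi> x = s c x)"
  interpret lendo s \<phi> using vs lin by (simp add: lendo_def lendo_axioms_def)
  have act_add: "act g (x + y) = act g x + act g y" and act_scale: "act g (s c x) = s c (act g x)"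
    if "g \<in> A" for g x y c
    using actlin[OF that] unfolding Vector_Spaces.linear_iff by auto
  have act0: "act g 0 = 0" if "g \<in> A" for g using act_scale[OF that, of 0 0] by simp
  define \<psi> where "\<psi> c x = \<phi> x - s c x" for c x
  have psi_add: "\<psi> c (x + y) = \<psi> c x + \<psi> c y" for c x y
    by (simp add: \<psi>_def phi_add scale_right_distrib)
  have psi_scale: "\<psi> c (s d x) = s d (\<psi> c x)" for c d x
    by (simp add: \<psi>_def phi_scale scale_right_diff_distrib scale_scale mult.commute)
  have psi_diff: "\<psi> c (x - y) = \<psi> c x - \<psi> c y" for c x y
    by (simp add: \<psi>_def phi_add scale_right_diff_distrib)
       (metis add_diff_cancel diff_add_cancel phi_add)
  have psi0: "\<psi> c 0 = 0" for c by (simp add: \<psi>_def)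
  have psi_comm: "act g (\<psi> c x) = \<psi> c (act g x)" if "g \<in> A" for g c x
  proof -
    have "act g (\<psi> c x) + act g (s c x) = act g (\<phi> x)"
      using act_add[OF that, of "\<psi> c x" "s c x"] by (simp add: \<psi>_def)
    then show ?thesis using comm[OF that] act_scale[OF that] by (simp add: \<psi>_def eq_diff_eq)
  qed
  have inj: "inj (\<psi> c)" for c
  proof -
    let ?K = "{x. \<psi> c x = 0}"
    have "module.subspace s ?K"
      unfolding subspace_def using psi_add psi_scale psi0 by auto
    moreover have "\<forall>g\<in>A. \<forall>u\<in>?K. act g u \<in> ?K"
    proof (intro ballI)
      fix g u assume g: "g \<in> A" and u: "u \<in> ?K"
      have "\<psi> c (act g u) = act g (\<psi> c u)" using psi_comm[OF g] by simp
      also have "\<dots> = 0" using u act0[OF g] by simp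
      finally show "act g u \<in> ?K" by simp
    qed
    ultimately have "?K = {0} \<or> ?K = UNIV" using simple by blast
    moreover have "?K \<noteq> UNIV"
    proof
      assume "?K = UNIV"
      then have "\<forall>x. \<phi> x = s c x" unfolding \<psi>_def by auto
      with H show False by blast
    qed
    ultimately have K: "?K = {0}" by blast
    show ?thesis
    proof (rule injI)
      fix x y assume "\<psi> c x = \<psi> c y"
      then have "x - y \<in> ?K" by (simp add: psi_diff)
      then show "x = y" using K by auto
    qed
  qed
  have surj: "surj (\<psi> c)" for c
  proof -
    let ?R = "range (\<psi> c)"
    have "module.subspace s ?R"
      unfolding subspace_def
    proof (intro conjI ballI allI)
      show "0 \<in> ?R" using psi0[of c] by (metis rangeI)
      fix x y d assume "x \<in> ?R" "y \<in> ?R"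
      then obtain a b where "x = \<psi> c a" "y = \<psi> c b" by blast
      then show "x + y \<in> ?R" "s d x \<in> ?R" using psi_add psi_scale by (metis rangeI)+
    qed
    moreover have "\<forall>g\<in>A. \<forall>u\<in>?R. act g u \<in> ?R"
      using psi_comm by auto
    ultimately have "?R = {0} \<or> ?R = UNIV" using simple by blast
    moreover have "\<psi> c v0 \<noteq> 0" using inj[of c] nz psi0[of c] by (metis injD)
    ultimately show ?thesis by blast
  qed
  define R where "R c y = inv (\<psi> c) y" for c y
  have R: "\<psi> c (R c y) = y" for c y
    unfolding R_def using surj by (simp add: surj_f_inv_f)
  have injpsi: "inj (\<lambda>x. \<phi> x - s c x)" for c using inj[of c] unfolding \<psi>_def by simp
  define P where "P L = (\<Prod>k\<in>L. [:-k, 1:])" for L :: "complex set"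
  have key: "\<forall>l\<in>L. u l = 0" if L: "finite L" and sm: "(\<Sum>l\<in>L. s (u l) (R l v0)) = 0" for L u
  proof -
    have 1: "peval (P L) (R l v0) = peval (P (L - {l})) v0" if "l \<in> L" for l
    proof -
      have "P L = P (L - {l}) * [:-l, 1:]"
        unfolding P_def using L that by (simp add: prod.remove mult.commute)
      then have "peval (P L) (R l v0) = peval (P (L - {l})) (\<psi> l (R l v0))"
        by (simp only: peval_mult peval_lin \<psi>_def)
      then show ?thesis using R by simp
    qed
    define p where "p = (\<Sum>l\<in>L. smult (u l) (P (L - {l})))"
    have "peval p v0 = (\<Sum>l\<in>L. s (u l) (peval (P L) (R l v0)))"
      unfolding p_def by (simp add: peval_sum peval_smult 1)
    also have "\<dots> = peval (P L) (\<Sum>l\<in>L. s (u l) (R l v0))"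
      by (simp add: peval_lin_sum peval_lin_scale)
    also have "\<dots> = 0" by (simp add: sm peval_lin_0)
    finally have pv: "peval p v0 = 0" .
    have p0: "p = 0"
    proof (rule ccontr)
      assume "p \<noteq> 0"
      then have "inj (peval p)" using peval_inj injpsi by blast
      then show False using pv peval_lin_0[of p] nz by (metis injD)
    qed
    show ?thesis
    proof
      fix m assume m: "m \<in> L"
      have "0 = poly p m" using p0 by simp
      also have "\<dots> = (\<Sum>l\<in>L. u l * (\<Prod>k\<in>L - {l}. m - k))"
        unfolding p_def P_def by (simp add: poly_sum poly_prod)
      also have "\<dots> = u m * (\<Prod>k\<in>L - {m}. m - k)"
      proof -
        have "(\<Sum>l\<in>L. u l * (\<Prod>k\<in>L - {l}. m - k)) = (\<Sum>l\<in>{m}. u l * (\<Prod>k\<in>L - {l}. m - k))"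
        proof (rule sum.mono_neutral_right)
          show "\<forall>i\<in>L - {m}. u i * (\<Prod>k\<in>L - {i}. m - k) = 0"
          proof
            fix i assume i: "i \<in> L - {m}"
            have "(\<Prod>k\<in>L - {i}. m - k) = 0"
              using L m i by (intro prod_zero) auto
            then show "u i * (\<Prod>k\<in>L - {i}. m - k) = 0" by simp
          qed
        qed (use L m in auto)
        then show ?thesis by simp
      qed
      finally have "u m * (\<Prod>k\<in>L - {m}. m - k) = 0" by simp
      moreover have "(\<Prod>k\<in>L - {m}. m - k) \<noteq> 0" using L by auto
      ultimately show "u m = 0" by simp
    qed
  qed
  define f where "f c = R c v0" for c
  have injf: "inj f"
  proof (rule injI)
    fix a b assume ab: "f a = f b"
    show "a = b"
    proof (rule ccontr)
      assume "a \<noteq> b"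
      have "(\<Sum>l\<in>{a, b}. s ((\<lambda>l. if l = a then 1 else -1) l) (R l v0)) = 0"
        using \<open>a \<noteq> b\<close> ab by (simp add: f_def scale_minus_left)
      then show False using key[of "{a,b}" "\<lambda>l. if l = a then 1 else -1"] by auto
    qed
  qed
  have "independent (range f)"
    unfolding independent_explicit_finite_subsets
  proof (intro allI impI ballI)
    fix T u v assume T: "T \<subseteq> range f" "finite T" and sm: "(\<Sum>v\<in>T. s (u v) v) = 0" and v: "v \<in> T"
    define L where "L = f -` T"
    have TL: "T = f ` L" using T unfolding L_def by auto
    have L: "finite L" unfolding L_def using T injf by (simp add: finite_vimageI)
    have "(\<Sum>l\<in>L. s (u (f l)) (R l v0)) = 0"
      using sm injf unfolding TL f_def by (simp add: sum.reindex inj_on_def)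
    then have "\<forall>l\<in>L. u (f l) = 0" using key[OF L, of "\<lambda>l. u (f l)"] by blast
    then show "u v = 0" using v TL by auto
  qed
  then have "countable (range f)" using indep_countable[OF C Csp] by blast
  then have "countable (UNIV :: complex set)" using countable_image_inj_eq[of f UNIV] injf by simp
  then show False using uncountable_UNIV_complex by blast
qed




lemma add_sum:
  fixes f :: "'a::ab_group_add \<Rightarrow> 'b::ab_group_add"
  assumes "\<And>a b. f (a + b) = f a + f b"
  shows "f (sum g A) = (\<Sum>x\<in>A. f (g x))"
proof -
  interpret additive f by unfold_locales (rule assms)
  show ?thesis by (rule sum)
qed

context
  fixes s1 :: "complex \<Rightarrow> 'v1::ab_group_add \<Rightarrow> 'v1" and act1 :: "'l \<Rightarrow> 'v1 \<Rightarrow> 'v1"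
    and s2 :: "complex \<Rightarrow> 'v2::ab_group_add \<Rightarrow> 'v2" and act2 :: "'l \<Rightarrow> 'v2 \<Rightarrow> 'v2"
    and sW :: "complex \<Rightarrow> 'w::ab_group_add \<Rightarrow> 'w" and tens :: "'v1 \<Rightarrow> 'v2 \<Rightarrow> 'w"
    and actW :: "'l \<Rightarrow> 'w \<Rightarrow> 'w" and U :: "'w set" and C1 :: "'v1 set"
  assumes vs1: "vector_space s1" and vs2: "vector_space s2" and vsW: "vector_space sW"
    and tens_bil: "bilinear_map s1 s2 sW tens"
    and act1_lin: "\<forall>g. Vector_Spaces.linear s1 s1 (act1 g)"
    and act2_lin: "\<forall>g. Vector_Spaces.linear s2 s2 (act2 g)"
    and actW_lin: "\<forall>g. Vector_Spaces.linear sW sW (actW g)"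
    and actW_tens: "\<forall>g v w. actW g (tens v w) = tens (act1 g v) w + tens v (act2 g w)"
    and Usub: "submodule sW actW UNIV U"
    and simpA: "\<forall>S. finite S \<longrightarrow> simple_module s1 act1 (ann_set act2 S)"
    and C1: "countable C1" "module.span s1 C1 = UNIV"
    and Wsp: "module.span sW {tens x y | x y. True} = UNIV"
begin

interpretation vs1: vector_space s1 by (rule vs1)
interpretation vs2: vector_space s2 by (rule vs2)
interpretation vsW: vector_space sW by (rule vsW)

lemma tens_add1: "tens (x + y) w = tens x w + tens y w"
  and tens_scale1: "tens (s1 c x) w = sW c (tens x w)"
  and tens_add2: "tens x (w + w') = tens x w + tens x w'"
  and tens_scale2: "tens x (s2 c w) = sW c (tens x w)"
  using tens_bil unfolding bilinear_map_def Vector_Spaces.linear_iff by auto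

lemma tens_01[simp]: "tens 0 w = 0" using tens_scale1[of 0 0 w] by simp
lemma tens_02[simp]: "tens x 0 = 0" using tens_scale2[of x 0 0] by simp

lemma tens_diff1: "tens (x - y) w = tens x w - tens y w"
  by (metis add_diff_cancel diff_add_cancel tens_add1)

lemma tens_sum1: "tens (sum f A) w = (\<Sum>i\<in>A. tens (f i) w)"
  by (rule add_sum[where f = "\<lambda>x. tens x w"]) (rule tens_add1)
lemma tens_sum2: "tens x (sum f A) = (\<Sum>i\<in>A. tens x (f i))"
  by (rule add_sum[where f = "tens x"]) (rule tens_add2)

lemma act1_add: "act1 g (x + y) = act1 g x + act1 g y"
  and act1_scale: "act1 g (s1 c x) = s1 c (act1 g x)"
  using act1_lin unfolding Vector_Spaces.linear_iff by auto
lemma act1_0[simp]: "act1 g 0 = 0" using act1_scale[of g 0 0] by simp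

lemma actW_add: "actW g (x + y) = actW g x + actW g y"
  using actW_lin unfolding Vector_Spaces.linear_iff by auto

lemma Usubspace: "vsW.subspace U" using Usub unfolding submodule_def by auto
lemma Uinv: "u \<in> U \<Longrightarrow> actW g u \<in> U" using Usub unfolding submodule_def by auto

lemma dix:
  assumes S: "finite S" and lin: "Vector_Spaces.linear s1 s1 \<phi>"
    and comm: "\<And>g x. g \<in> ann_set act2 S \<Longrightarrow> \<phi> (act1 g x) = act1 g (\<phi> x)"
  shows "\<exists>c. \<forall>x. \<phi> x = s1 c x"
proof -
  have sm: "simple_module s1 act1 (ann_set act2 S)" using simpA S by blast
  then obtain v0 :: 'v1 where v0: "v0 \<noteq> 0" unfolding simple_module_def by blast
  show ?thesis
  proof (rule dixmier[where A="ann_set act2 S" and act=act1, OF vs1 C1 v0 _ _ lin comm])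
    fix U' assume "vs1.subspace U'" "\<forall>g\<in>ann_set act2 S. \<forall>u\<in>U'. act1 g u \<in> U'"
    then show "U' = {0} \<or> U' = UNIV" using sm unfolding simple_module_def submodule_def by blast
  qed (use act1_lin in auto)
qed


lemma main_claim:
  assumes fin: "finite I"
  shows "\<forall>x w. (\<Sum>i\<in>I. tens (x i) (w i)) \<in> U \<longrightarrow>
     (\<Sum>i\<in>I. tens (x i) (w i)) \<in> vsW.span {tens v w | v w. w \<in> {w. \<forall>v. tens v w \<in> U}}"
  using fin
proof (induction I rule: finite_psubset_induct)
  case (psubset I)
  let ?T = "vsW.span {tens v w | v w. w \<in> {w. \<forall>v. tens v w \<in> U}}"
  show ?case
  proof (intro allI impI)
    fix x :: "'a \<Rightarrow> 'v1" and w :: "'a \<Rightarrow> 'v2"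
    assume uU: "(\<Sum>i\<in>I. tens (x i) (w i)) \<in> U"
    define M where "M = {y. (\<Sum>i\<in>I. tens (y i) (w i)) \<in> U}"
    define A where "A = ann_set act2 (w ` I)"
    have xM: "x \<in> M" using uU by (simp add: M_def)
    have IHuse: "(\<Sum>i\<in>I. tens (y i) (w i)) \<in> ?T" if j: "j \<in> I" "y j = 0" and yM: "y \<in> M" for y j
    proof -
      have eq: "(\<Sum>i\<in>I. tens (y i) (w i)) = (\<Sum>i\<in>I - {j}. tens (y i) (w i))"
        using psubset.hyps j by (simp add: sum.remove)
      have psub: "I - {j} \<subset> I" using j by auto
      have H: "(\<Sum>i\<in>I - {j}. tens (y i) (w i)) \<in> U \<longrightarrow> (\<Sum>i\<in>I - {j}. tens (y i) (w i)) \<in> ?T"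
        using psubset.IH[OF psub] by blast
      then show ?thesis using yM eq by (simp add: M_def)
    qed
    have M0: "(\<lambda>i. 0) \<in> M" unfolding M_def using vsW.subspace_0[OF Usubspace] by simp
    have Madd: "(\<lambda>i. y i + y' i) \<in> M" if "y \<in> M" "y' \<in> M" for y y'
      using vsW.subspace_add[OF Usubspace, of "\<Sum>i\<in>I. tens (y i) (w i)" "\<Sum>i\<in>I. tens (y' i) (w i)"] that
      by (simp add: M_def tens_add1 sum.distrib)
    have Mdiff: "(\<lambda>i. y i - y' i) \<in> M" if "y \<in> M" "y' \<in> M" for y y'
      using vsW.subspace_diff[OF Usubspace, of "\<Sum>i\<in>I. tens (y i) (w i)" "\<Sum>i\<in>I. tens (y' i) (w i)"] that
      by (simp add: M_def tens_diff1 sum_subtractf)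
    have Mscale: "(\<lambda>i. s1 c (y i)) \<in> M" if "y \<in> M" for y c
      using vsW.subspace_scale[OF Usubspace, of "\<Sum>i\<in>I. tens (y i) (w i)" c] that
      by (simp add: M_def tens_scale1 vsW.scale_sum_right)
    have Mact: "(\<lambda>i. act1 g (y i)) \<in> M" if "y \<in> M" "g \<in> A" for y g
    proof -
      have "actW g (\<Sum>i\<in>I. tens (y i) (w i)) = (\<Sum>i\<in>I. actW g (tens (y i) (w i)))"
        by (rule add_sum) (rule actW_add)
      also have "\<dots> = (\<Sum>i\<in>I. tens (act1 g (y i)) (w i))"
        using that(2) by (intro sum.cong) (auto simp: actW_tens A_def ann_set_def)
      finally show ?thesis using Uinv that(1) unfolding M_def by (metis mem_Collect_eq)
    qed
    have simple: "Z = {0} \<or> Z = UNIV" if "vs1.subspace Z" "\<forall>g\<in>A. \<forall>z\<in>Z. act1 g z \<in> Z" for Z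
      using simpA psubset.hyps that unfolding A_def simple_module_def submodule_def by blast
    show "(\<Sum>i\<in>I. tens (x i) (w i)) \<in> ?T"
    proof (cases "I = {}")
      case True then show ?thesis by (simp add: vsW.span_zero)
    next
      case False
      then obtain n where n: "n \<in> I" by blast
      show ?thesis
      proof (cases "x n = 0")
        case True show ?thesis by (rule IHuse[OF n True xM])
      next
        case xn: False
        show ?thesis
        proof (cases "\<exists>y\<in>M. y n = 0 \<and> (\<exists>i\<in>I. y i \<noteq> 0)")
          case True
          then obtain y0 i where y0: "y0 \<in> M" "y0 n = 0" "i \<in> I" "y0 i \<noteq> 0" by blast
          define Z where "Z = {z. \<exists>y\<in>M. y n = 0 \<and> y i = z}"
          have "vs1.subspace Z"
            unfolding vs1.subspace_def
          proof (intro conjI ballI allI)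
            show "0 \<in> Z" unfolding Z_def using M0 by force
            fix a b c assume "a \<in> Z" "b \<in> Z"
            then obtain ya yb where h: "ya \<in> M" "ya n = 0" "ya i = a" "yb \<in> M" "yb n = 0" "yb i = b"
              unfolding Z_def by blast
            show "a + b \<in> Z" unfolding Z_def
              using Madd[OF h(1,4)] h by (intro CollectI bexI[of _ "\<lambda>j. ya j + yb j"]) auto
            show "s1 c a \<in> Z" unfolding Z_def
              using Mscale[OF h(1)] h by (intro CollectI bexI[of _ "\<lambda>j. s1 c (ya j)"]) auto
          qed
          moreover have "\<forall>g\<in>A. \<forall>z\<in>Z. act1 g z \<in> Z"
          proof (intro ballI)
            fix g z assume g: "g \<in> A" and "z \<in> Z"
            then obtain y where h: "y \<in> M" "y n = 0" "y i = z" unfolding Z_def by blast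
            show "act1 g z \<in> Z" unfolding Z_def
              using Mact[OF h(1) g] h by (intro CollectI bexI[of _ "\<lambda>j. act1 g (y j)"]) auto
          qed
          ultimately have "Z = {0} \<or> Z = UNIV" by (rule simple)
          moreover have "y0 i \<in> Z" unfolding Z_def using y0 by blast
          ultimately have "x i \<in> Z" using y0 by auto
          then obtain y where y: "y \<in> M" "y n = 0" "y i = x i" unfolding Z_def by blast
          have S1: "(\<Sum>j\<in>I. tens (y j) (w j)) \<in> ?T" using IHuse[OF n y(2) y(1)] .
          have S2: "(\<Sum>j\<in>I. tens (x j - y j) (w j)) \<in> ?T"
            using IHuse[OF y0(3), of "\<lambda>j. x j - y j"] Mdiff[OF xM y(1)] y(3) by simp
          have "(\<Sum>j\<in>I. tens (x j) (w j)) = (\<Sum>j\<in>I. tens (y j) (w j)) + (\<Sum>j\<in>I. tens (x j - y j) (w j))"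
            by (simp add: tens_diff1 sum_subtractf)
          then show ?thesis using S1 S2 vsW.span_add by simp
        next
          case False
          then have uniq0: "\<forall>i\<in>I. y i = 0" if "y \<in> M" "y n = 0" for y using that by blast
          have uniq: "\<forall>i\<in>I. y i = y' i" if "y \<in> M" "y' \<in> M" "y n = y' n" for y y'
            using uniq0[OF Mdiff[OF that(1,2)]] that(3) by simp
          define Z where "Z = {z. \<exists>y\<in>M. y n = z}"
          have "vs1.subspace Z"
            unfolding vs1.subspace_def
          proof (intro conjI ballI allI)
            show "0 \<in> Z" unfolding Z_def using M0 by force
            fix a b c assume "a \<in> Z" "b \<in> Z"
            then obtain ya yb where h: "ya \<in> M" "ya n = a" "yb \<in> M" "yb n = b"
              unfolding Z_def by blast
            show "a + b \<in> Z" unfolding Z_def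
              using Madd[OF h(1,3)] h by (intro CollectI bexI[of _ "\<lambda>j. ya j + yb j"]) auto
            show "s1 c a \<in> Z" unfolding Z_def
              using Mscale[OF h(1)] h by (intro CollectI bexI[of _ "\<lambda>j. s1 c (ya j)"]) auto
          qed
          moreover have "\<forall>g\<in>A. \<forall>z\<in>Z. act1 g z \<in> Z"
          proof (intro ballI)
            fix g z assume g: "g \<in> A" and "z \<in> Z"
            then obtain y where h: "y \<in> M" "y n = z" unfolding Z_def by blast
            show "act1 g z \<in> Z" unfolding Z_def
              using Mact[OF h(1) g] h by (intro CollectI bexI[of _ "\<lambda>j. act1 g (y j)"]) auto
          qed
          ultimately have "Z = {0} \<or> Z = UNIV" by (rule simple)
          moreover have "x n \<in> Z" unfolding Z_def using xM by blast
          ultimately have ZU: "Z = UNIV" using xn by auto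
          define Y where "Y z = (SOME y. y \<in> M \<and> y n = z)" for z
          have YM: "Y z \<in> M \<and> Y z n = z" for z
          proof -
            have "\<exists>y. y \<in> M \<and> y n = z" using ZU unfolding Z_def by blast
            then show ?thesis unfolding Y_def by (rule someI_ex)
          qed
          have scal: "\<exists>c. \<forall>z. Y z i = s1 c z" if i: "i \<in> I" for i
          proof (rule dix[of "w ` I"])
            show "finite (w ` I)" using psubset.hyps by simp
            show "Vector_Spaces.linear s1 s1 (\<lambda>z. Y z i)"
              unfolding Vector_Spaces.linear_iff
            proof (intro conjI allI)
              fix a b c
              have "(\<lambda>j. Y a j + Y b j) \<in> M" using Madd YM by blast
              then have "\<forall>i\<in>I. Y (a+b) i = Y a i + Y b i"
                using uniq[of "Y (a+b)" "\<lambda>j. Y a j + Y b j"] YM by simp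
              then show "Y (a + b) i = Y a i + Y b i" using i by blast
              have "(\<lambda>j. s1 c (Y a j)) \<in> M" using Mscale YM by blast
              then have "\<forall>i\<in>I. Y (s1 c a) i = s1 c (Y a i)"
                using uniq[of "Y (s1 c a)" "\<lambda>j. s1 c (Y a j)"] YM by simp
              then show "Y (s1 c a) i = s1 c (Y a i)" using i by blast
            qed (auto simp: vs1)
            fix g z assume g: "g \<in> ann_set act2 (w ` I)"
            have "(\<lambda>j. act1 g (Y z j)) \<in> M" using Mact YM g unfolding A_def by blast
            then have "\<forall>i\<in>I. Y (act1 g z) i = act1 g (Y z i)"
              using uniq[of "Y (act1 g z)" "\<lambda>j. act1 g (Y z j)"] YM by simp
            then show "Y (act1 g z) i = act1 g (Y z i)" using i by blast
          qed
          then obtain c where c: "\<And>i z. i \<in> I \<Longrightarrow> Y z i = s1 (c i) z" by metis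
          define w' where "w' = (\<Sum>i\<in>I. s2 (c i) (w i))"
          have w'V: "tens z w' \<in> U" for z
          proof -
            have "tens z w' = (\<Sum>i\<in>I. tens (Y z i) (w i))"
              unfolding w'_def tens_sum2 by (intro sum.cong) (auto simp: c tens_scale1 tens_scale2)
            then show ?thesis using YM[of z] unfolding M_def by simp
          qed
          have "(\<Sum>i\<in>I. tens (x i) (w i)) = (\<Sum>i\<in>I. tens (Y (x n) i) (w i))"
            using uniq[OF xM YM[THEN conjunct1], of "x n"] YM by (intro sum.cong) auto
          also have "\<dots> = tens (x n) w'"
            unfolding w'_def tens_sum2 by (intro sum.cong) (auto simp: c tens_scale1 tens_scale2)
          finally show ?thesis using w'V by (auto intro!: vsW.span_base)
        qed
      qed
    qed
  qed
qed


lemma part_a: "\<exists>V2'. submodule s2 act2 UNIV V2' \<and> U = vsW.span {tens v w | v w. w \<in> V2'}"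
proof (intro exI conjI)
  let ?V = "{w. \<forall>v. tens v w \<in> U}"
  show "submodule s2 act2 UNIV ?V"
    unfolding submodule_def vs2.subspace_def
  proof (intro conjI ballI allI)
    show "0 \<in> ?V" using vsW.subspace_0[OF Usubspace] by simp
    fix a b c assume a: "a \<in> ?V" and b: "b \<in> ?V"
    show "a + b \<in> ?V" using a b vsW.subspace_add[OF Usubspace] by (simp add: tens_add2)
    show "s2 c a \<in> ?V" using a vsW.subspace_scale[OF Usubspace] by (simp add: tens_scale2)
  next
    fix g a assume a: "a \<in> ?V"
    show "act2 g a \<in> ?V"
    proof
      show "\<forall>v. tens v (act2 g a) \<in> U"
      proof
        fix v
        have "tens v (act2 g a) = actW g (tens v a) - tens (act1 g v) a"
          using actW_tens by simp
        then show "tens v (act2 g a) \<in> U"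
          using a Uinv vsW.subspace_diff[OF Usubspace] by simp
      qed
    qed
  qed
  show "U = vsW.span {tens v w | v w. w \<in> ?V}"
  proof
    show "vsW.span {tens v w | v w. w \<in> ?V} \<subseteq> U"
      by (rule vsW.span_minimal) (use Usubspace in auto)
    show "U \<subseteq> vsW.span {tens v w | v w. w \<in> ?V}"
    proof
      fix u assume uU: "u \<in> U"
      have "u \<in> vsW.span {tens x y | x y. True}" using Wsp by simp
      then obtain t r where t: "finite t" "t \<subseteq> {tens x y | x y. True}" "u = (\<Sum>a\<in>t. sW (r a) a)"
        unfolding vsW.span_explicit by blast
      have "\<forall>a\<in>t. \<exists>p. a = tens (fst p) (snd p)" using t(2) by auto
      then obtain p where p: "\<And>a. a \<in> t \<Longrightarrow> a = tens (fst (p a)) (snd (p a))" by metis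
      have "u = (\<Sum>a\<in>t. tens (s1 (r a) (fst (p a))) (snd (p a)))"
        unfolding t(3) by (intro sum.cong) (auto simp: tens_scale1 p[symmetric])
      with main_claim[OF t(1)] uU show "u \<in> vsW.span {tens v w | v w. w \<in> ?V}" by auto
    qed
  qed
qed

end




lemma vs_complex: "vector_space ((*) :: complex \<Rightarrow> complex \<Rightarrow> complex)"
  by unfold_locales (auto simp: algebra_simps)

lemma functional_exists:
  fixes s :: "complex \<Rightarrow> 'v::ab_group_add \<Rightarrow> 'v"
  assumes vs: "vector_space s" and v: "v \<noteq> 0"
  shows "\<exists>f. Vector_Spaces.linear s (*) f \<and> f v = 1"
proof -
  interpret vector_space_pair s "(*) :: complex \<Rightarrow> complex \<Rightarrow> complex"
    using vs vs_complex by (simp add: vector_space_pair_def)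
  have "vs1.independent {v}" using v by simp
  from linear_independent_extend[OF this, of "\<lambda>_. 1"] show ?thesis by auto
qed

theorem theorem7:
  fixes sL :: "complex \<Rightarrow> 'l::ab_group_add \<Rightarrow> 'l" and br :: "'l \<Rightarrow> 'l \<Rightarrow> 'l"
    and s1 :: "complex \<Rightarrow> 'v1::ab_group_add \<Rightarrow> 'v1" and act1 :: "'l \<Rightarrow> 'v1 \<Rightarrow> 'v1"
    and s2 :: "complex \<Rightarrow> 'v2::ab_group_add \<Rightarrow> 'v2" and act2 :: "'l \<Rightarrow> 'v2 \<Rightarrow> 'v2"
    and sW :: "complex \<Rightarrow> 'w::ab_group_add \<Rightarrow> 'w" and tens :: "'v1 \<Rightarrow> 'v2 \<Rightarrow> 'w"
    and actW :: "'l \<Rightarrow> 'w \<Rightarrow> 'w"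
  assumes L: "lie_algebra sL br" and cb: "countable_basis sL"
    and V1: "lie_module sL br s1 act1" and V2: "lie_module sL br s2 act2"
    and W: "is_tensor_product s1 s2 sW tens"
    and actW_lin: "\<forall>g. Vector_Spaces.linear sW sW (actW g)"
    and actW_tens: "\<forall>g v w. actW g (tens v w) = tens (act1 g v) w + tens v (act2 g w)"
    and cond: "(simple_module s1 act1 UNIV \<and>
                 (\<forall>v S. finite S \<longrightarrow>
                    {a + b | a b. a \<in> ann act1 v \<and> b \<in> ann_set act2 S} = UNIV))
             \<or> (\<forall>S. finite S \<longrightarrow> simple_module s1 act1 (ann_set act2 S))"
  shows "(\<forall>U. submodule sW actW UNIV U \<longrightarrow>
            (\<exists>V2'. submodule s2 act2 UNIV V2' \<and>
                   U = module.span sW {tens v w | v w. w \<in> V2'}))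
       \<and> (simple_module s1 act1 UNIV \<and> simple_module s2 act2 UNIV
            \<longrightarrow> simple_module sW actW UNIV)"
proof -
  have vsL: "vector_space sL" using L unfolding lie_algebra_def by auto
  have vs1: "vector_space s1" and bil1: "bilinear_map sL s1 s1 act1"
    using V1 unfolding lie_module_def by auto
  have vs2: "vector_space s2" and bil2: "bilinear_map sL s2 s2 act2"
    using V2 unfolding lie_module_def by auto
  have vsW: "vector_space sW" and tens_bil: "bilinear_map s1 s2 sW tens"
    and Wsp: "module.span sW {tens x y | x y. True} = UNIV"
    and univ: "\<And>B::'v1 \<Rightarrow> 'v2 \<Rightarrow> complex. bilinear_map s1 s2 (*) B \<Longrightarrow>
        (\<exists>\<phi>. Vector_Spaces.linear sW (*) \<phi> \<and> (\<forall>x y. \<phi> (tens x y) = B x y))"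
    using W unfolding is_tensor_product_def by auto
  interpret vsL: vector_space sL by (rule vsL)
  interpret vs1: vector_space s1 by (rule vs1)
  interpret vs2: vector_space s2 by (rule vs2)
  interpret vsW: vector_space sW by (rule vsW)
  have act1_lin: "\<forall>g. Vector_Spaces.linear s1 s1 (act1 g)"
    and act1_linL: "\<And>v. Vector_Spaces.linear sL s1 (\<lambda>g. act1 g v)"
    using bil1 unfolding bilinear_map_def by auto
  have act2_lin: "\<forall>g. Vector_Spaces.linear s2 s2 (act2 g)"
    using bil2 unfolding bilinear_map_def by auto
  have actL_add: "act1 (a + b) v = act1 a v + act1 b v"
    and actL_scale: "act1 (sL c a) v = s1 c (act1 a v)" for a b v c
    using act1_linL[of v] unfolding Vector_Spaces.linear_iff by auto
  have actL0: "act1 0 v = 0" for v using actL_scale[of 0 0 v] by simp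
  have act1_add: "act1 g (x + y) = act1 g x + act1 g y"
    and act1_scale: "act1 g (s1 c x) = s1 c (act1 g x)" for g x y c
    using act1_lin unfolding Vector_Spaces.linear_iff by auto
  have act1_0: "act1 g 0 = 0" for g using act1_scale[of g 0 0] by simp
  have simpA: "\<forall>S. finite S \<longrightarrow> simple_module s1 act1 (ann_set act2 S)"
  proof (cases "\<forall>S. finite S \<longrightarrow> simple_module s1 act1 (ann_set act2 S)")
    case True then show ?thesis .
  next
    case False
    then have cc: "simple_module s1 act1 UNIV \<and> (\<forall>v S. finite S \<longrightarrow>
                    {a + b | a b. a \<in> ann act1 v \<and> b \<in> ann_set act2 S} = UNIV)"
      using cond by blast
    then have c1: "simple_module s1 act1 UNIV" by blast
    have dec: "\<And>v S. finite S \<Longrightarrow> {a + b | a b. a \<in> ann act1 v \<and> b \<in> ann_set act2 S} = UNIV"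
      using cc by blast
    show ?thesis
    proof (intro allI impI)
      fix S :: "'v2 set" assume S: "finite S"
      show "simple_module s1 act1 (ann_set act2 S)"
        unfolding simple_module_def
      proof (intro conjI allI impI)
        show "\<exists>v::'v1. v \<noteq> 0" using c1 unfolding simple_module_def by blast
        fix U' assume U': "submodule s1 act1 (ann_set act2 S) U'"
        have "submodule s1 act1 UNIV U'"
          unfolding submodule_def
        proof (intro conjI ballI)
          show "vs1.subspace U'" using U' unfolding submodule_def by blast
          fix g u assume u: "u \<in> U'"
          have "g \<in> {a + b | a b. a \<in> ann act1 u \<and> b \<in> ann_set act2 S}" using dec[OF S] by blast
          then obtain a b where ab: "g = a + b" "act1 a u = 0" "b \<in> ann_set act2 S"
            unfolding ann_def by blast
          have "act1 g u = act1 b u" using ab by (simp add: actL_add)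
          then show "act1 g u \<in> U'" using U' u ab(3) unfolding submodule_def by auto
        qed
        then show "U' = {0} \<or> U' = UNIV" using c1 unfolding simple_module_def by blast
      qed
    qed
  qed
  have c1: "simple_module s1 act1 UNIV"
    using simpA[rule_format, of "{}"] by (simp add: ann_set_def)
  then obtain v0 :: 'v1 where v0: "v0 \<noteq> 0" unfolding simple_module_def by blast
  obtain B where B: "countable B" "vsL.span B = UNIV"
    using cb unfolding countable_basis_def by blast
  define C1 where "C1 = (\<lambda>bs. foldr act1 bs v0) ` lists B"
  have C1c: "countable C1" unfolding C1_def using B(1) by simp
  have C1sp: "vs1.span C1 = UNIV"
  proof -
    have inv: "act1 g y \<in> vs1.span C1" if y: "y \<in> vs1.span C1" for g y
    proof -
      let ?G = "{g. act1 g y \<in> vs1.span C1}"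
      have "vsL.subspace ?G"
        unfolding vsL.subspace_def
        by (auto simp: actL0 actL_add actL_scale vs1.span_zero vs1.span_add vs1.span_scale)
      moreover have "B \<subseteq> ?G"
      proof
        fix b assume b: "b \<in> B"
        have "act1 b y \<in> vs1.span C1" using y
        proof (induction rule: vs1.span_induct_alt)
          case base then show ?case by (simp add: act1_0 vs1.span_zero)
        next
          case (step c x z)
          have "act1 b x \<in> C1"
          proof -
            from step(1) obtain bs where "bs \<in> lists B" "x = foldr act1 bs v0"
              unfolding C1_def by blast
            then show ?thesis unfolding C1_def using b
              by (intro image_eqI[of _ _ "b # bs"]) auto
          qed
          then show ?case using step(2)
            by (simp add: act1_add act1_scale vs1.span_add vs1.span_scale vs1.span_base)
        qed
        then show "b \<in> ?G" by simp
      qed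
      ultimately have "vsL.span B \<subseteq> ?G" by (rule vsL.span_minimal[rotated])
      then show ?thesis using B(2) by auto
    qed
    have "submodule s1 act1 UNIV (vs1.span C1)"
      unfolding submodule_def using inv by auto
    then have "vs1.span C1 = {0} \<or> vs1.span C1 = UNIV" using c1 unfolding simple_module_def by blast
    moreover have "v0 \<in> vs1.span C1"
      unfolding C1_def by (rule vs1.span_base) (auto intro: image_eqI[of _ _ "[]"])
    ultimately show ?thesis using v0 by auto
  qed
  have partA: "\<exists>V2'. submodule s2 act2 UNIV V2' \<and> U = module.span sW {tens v w | v w. w \<in> V2'}"
    if U: "submodule sW actW UNIV U" for U
    by (rule part_a[OF vs1 vs2 vsW tens_bil act1_lin act2_lin actW_lin actW_tens U simpA C1c C1sp Wsp])
  show ?thesis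
  proof (intro conjI allI impI)
    fix U assume "submodule sW actW UNIV U"
    then show "\<exists>V2'. submodule s2 act2 UNIV V2' \<and> U = module.span sW {tens v w | v w. w \<in> V2'}"
      by (rule partA)
  next
    assume simp12: "simple_module s1 act1 UNIV \<and> simple_module s2 act2 UNIV"
    then obtain w0 :: 'v2 where w0: "w0 \<noteq> 0" unfolding simple_module_def by blast
    obtain f1 where f1: "Vector_Spaces.linear s1 (*) f1" "f1 v0 = 1"
      using functional_exists[OF vs1 v0] by blast
    obtain f2 where f2: "Vector_Spaces.linear s2 (*) f2" "f2 w0 = 1"
      using functional_exists[OF vs2 w0] by blast
    have "bilinear_map s1 s2 (*) (\<lambda>x y. f1 x * f2 y)"
      using f1(1) f2(1) vs1 vs2 vs_complex
      unfolding bilinear_map_def Vector_Spaces.linear_iff by (auto simp: algebra_simps)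
    then obtain \<phi> where \<phi>: "Vector_Spaces.linear sW (*) \<phi>" "\<And>x y. \<phi> (tens x y) = f1 x * f2 y"
      using univ by blast
    have "\<phi> 0 = 0" using \<phi>(1) unfolding Vector_Spaces.linear_iff
      by (metis add_cancel_right_right)
    moreover have "\<phi> (tens v0 w0) = 1" using \<phi>(2) f1(2) f2(2) by simp
    ultimately have nz: "tens v0 w0 \<noteq> 0" by auto
    show "simple_module sW actW UNIV"
      unfolding simple_module_def
    proof (intro conjI allI impI)
      show "\<exists>v::'w. v \<noteq> 0" using nz by blast
      fix U assume U: "submodule sW actW UNIV U"
      obtain V' where V': "submodule s2 act2 UNIV V'" "U = module.span sW {tens v w | v w. w \<in> V'}"
        using partA[OF U] by blast
      have "V' = {0} \<or> V' = UNIV" using simp12 V'(1) unfolding simple_module_def by blast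
      then show "U = {0} \<or> U = UNIV"
      proof
        assume "V' = {0}"
        have t0: "tens v 0 = 0" for v
        proof -
          have "tens v (s2 0 0) = sW 0 (tens v 0)"
            using tens_bil unfolding bilinear_map_def Vector_Spaces.linear_iff by blast
          then show ?thesis by simp
        qed
        then have "{tens v w | v w. w \<in> V'} = {0}"
          using \<open>V' = {0}\<close> by auto
        then show ?thesis using V'(2) by simp
      next
        assume "V' = UNIV"
        then show ?thesis using V'(2) Wsp by simp
      qed
    qed
  qed
qed


end
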